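(* Let $k\ge2$, $1\le m\le k-1$, and let $(k_1,\dots,k_m)$ be an ordered partition of $k$ into positive integers. Let $X_{k_1,\dots,k_m}$ be the set of $k$-admissible $m\times k$ matrices with entries in $\{0,\pm1\}$, having exactly one nonzero entry in each column and exactly $k_i$ nonzero entries in row $i$ for each $i$. Then $$\#X_{k_1,\dots,k_m}=2^{k-m}\prod_{i=1}^{m-1}\binom{k-\sum_{j=1}^{i-1}k_j-1}{k_i-1},$$ where the empty product is $1$ and the empty sum is $0$.
   Context: For $k\ge2$, a division $(\nu,\mu)$ of $\{1,\dots,k\}$ consists of $1\le m\le k-1$ and strictly increasing sequences $\nu_1<\dots<\nu_m$, $\mu_1<\dots<\mu_{k-m}$ in $\{1,\dots,k\}$ which are disjoint. Given a positive integer $q$, an $m\times k$ integer matrix $D=(d_{ij})$ is $(\nu,\mu)$-admissible if no column vanishes, the gcd of its entries is $1$, $d_{i\nu_j}=q\delta_{ij}$ for $1\le i,j\le m$, and $d_{i\mu_j}=0$ whenever $\mu_j<\nu_i$. $D$ is $k$-admissible if it is $(\nu,\mu)$-admissible for some division $(\nu,\mu)$ and some positive integer $q$. *)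

theory Defs
  imports Main
begin

text \<open>Matrices are functions nat => nat => int, rows indexed 1..m, columns 1..k.
Sequences nu_1<...<nu_m and mu_1<...<mu_(k-m) are functions on {1..m}, {1..k-m}.\<close>

definition is_division :: "nat \<Rightarrow> nat \<Rightarrow> (nat \<Rightarrow> nat) \<Rightarrow> (nat \<Rightarrow> nat) \<Rightarrow> bool" where
  "is_division k m \<nu> \<mu> \<longleftrightarrow>
     1 \<le> m \<and> m \<le> k - 1 \<and>
     strict_mono_on {1..m} \<nu> \<and> \<nu> ` {1..m} \<subseteq> {1..k} \<and>
     strict_mono_on {1..k-m} \<mu> \<and> \<mu> ` {1..k-m} \<subseteq> {1..k} \<and>
     \<nu> ` {1..m} \<inter> \<mu> ` {1..k-m} = {}"

definition admissible_wrt ::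
  "nat \<Rightarrow> nat \<Rightarrow> (nat \<Rightarrow> nat) \<Rightarrow> (nat \<Rightarrow> nat) \<Rightarrow> int \<Rightarrow> (nat \<Rightarrow> nat \<Rightarrow> int) \<Rightarrow> bool" where
  "admissible_wrt k m \<nu> \<mu> q D \<longleftrightarrow>
     (\<forall>j\<in>{1..k}. \<exists>i\<in>{1..m}. D i j \<noteq> 0) \<and>
     Gcd {D i j | i j. i \<in> {1..m} \<and> j \<in> {1..k}} = 1 \<and>
     (\<forall>i\<in>{1..m}. \<forall>j\<in>{1..m}. D i (\<nu> j) = (if i = j then q else 0)) \<and>
     (\<forall>i\<in>{1..m}. \<forall>j\<in>{1..k-m}. \<mu> j < \<nu> i \<longrightarrow> D i (\<mu> j) = 0)"

definition k_admissible :: "nat \<Rightarrow> nat \<Rightarrow> (nat \<Rightarrow> nat \<Rightarrow> int) \<Rightarrow> bool" where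
  "k_admissible k m D \<longleftrightarrow>
     2 \<le> k \<and> (\<exists>\<nu> \<mu> q. q > 0 \<and> is_division k m \<nu> \<mu> \<and> admissible_wrt k m \<nu> \<mu> q D)"

definition X_set :: "nat \<Rightarrow> nat \<Rightarrow> (nat \<Rightarrow> nat) \<Rightarrow> (nat \<Rightarrow> nat \<Rightarrow> int) set" where
  "X_set k m kk = {D.
     (\<forall>i j. i \<notin> {1..m} \<or> j \<notin> {1..k} \<longrightarrow> D i j = 0) \<and>
     (\<forall>i j. D i j \<in> {-1, 0, 1}) \<and>
     k_admissible k m D \<and>
     (\<forall>j\<in>{1..k}. card {i\<in>{1..m}. D i j \<noteq> 0} = 1) \<and>
     (\<forall>i\<in>{1..m}. card {j\<in>{1..k}. D i j \<noteq> 0} = kk i)}"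

end

theory Submission
  imports Defs "HOL-Library.FuncSet"
begin

definition GG :: "(nat \<Rightarrow> nat) \<Rightarrow> nat set \<Rightarrow> nat \<Rightarrow> nat \<Rightarrow> (nat \<Rightarrow> nat \<Rightarrow> int) set" where
  "GG kk A r n = {D. (\<forall>i j. i \<notin> {Suc r..r+n} \<or> j \<notin> A \<longrightarrow> D i j = 0) \<and>
     (\<forall>i j. D i j \<in> {-1,0,1}) \<and>
     (\<forall>j\<in>A. card {i\<in>{Suc r..r+n}. D i j \<noteq> 0} = 1) \<and>
     (\<forall>i\<in>{Suc r..r+n}. card {j\<in>A. D i j \<noteq> 0} = kk i) \<and>
     (\<exists>\<nu>. strict_mono_on {Suc r..r+n} \<nu> \<and>
        (\<forall>i\<in>{Suc r..r+n}. D i (\<nu> i) = 1 \<and> (\<forall>j\<in>A. D i j \<noteq> 0 \<longrightarrow> \<nu> i \<le> j)))}"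

definition PP :: "nat \<Rightarrow> nat set \<Rightarrow> (nat \<Rightarrow> int) set" where
  "PP a S = {p. (\<forall>j. p j \<noteq> 0 \<longleftrightarrow> j \<in> S) \<and> (\<forall>j. p j \<in> {-1,0,1}) \<and> p a = 1}"

lemma card1_eq: "card X = 1 \<Longrightarrow> x \<in> X \<Longrightarrow> y \<in> X \<Longrightarrow> x = y"
  by (metis card_1_singletonE singletonD)

lemma card1_ex: "card X = 1 \<Longrightarrow> \<exists>x. x \<in> X"
  by (metis card_1_singletonE singletonI)

lemma peel_fwd:
  assumes D: "D \<in> GG kk A r (Suc n)" and fin: "finite A" and ne: "A \<noteq> {}"
  defines "S \<equiv> {j\<in>A. D (Suc r) j \<noteq> 0}"
  shows "Min A \<in> S" "card S = kk (Suc r)" "D (Suc r) \<in> PP (Min A) S"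
    "D(Suc r := (\<lambda>_. 0)) \<in> GG kk (A - S) (Suc r) n"
proof -
  note G = D[unfolded GG_def mem_Collect_eq]
  have box: "\<And>i j. i \<notin> {Suc r..r+Suc n} \<or> j \<notin> A \<Longrightarrow> D i j = 0" using G by auto
  have vals: "\<And>i j. D i j \<in> {-1,0,1}" using G by auto
  have col: "\<And>j. j\<in>A \<Longrightarrow> card {i\<in>{Suc r..r+Suc n}. D i j \<noteq> 0} = 1" using G by auto
  have row: "\<And>i. i\<in>{Suc r..r+Suc n} \<Longrightarrow> card {j\<in>A. D i j \<noteq> 0} = kk i" using G by auto
  obtain \<nu> where sm: "strict_mono_on {Suc r..r+Suc n} \<nu>"
    and nu: "\<And>i. i\<in>{Suc r..r+Suc n} \<Longrightarrow> D i (\<nu> i) = 1"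
    and nule: "\<And>i j. i\<in>{Suc r..r+Suc n} \<Longrightarrow> j \<in> A \<Longrightarrow> D i j \<noteq> 0 \<Longrightarrow> \<nu> i \<le> j"
    using G by blast
  define a where "a = Min A"
  have aA: "a \<in> A" using fin ne a_def by simp
  obtain i where i: "i \<in> {Suc r..r+Suc n}" "D i a \<noteq> 0" using card1_ex[OF col[OF aA]] by auto
  have r1: "Suc r \<in> {Suc r..r+Suc n}" by simp
  have "D (Suc r) (\<nu> (Suc r)) \<noteq> 0" using nu[OF r1] by simp
  hence nuA: "\<nu> (Suc r) \<in> A" using box r1 by blast
  hence "a \<le> \<nu> (Suc r)" using fin a_def by simp
  have "\<nu> i \<le> a" using nule[OF i(1) aA i(2)] .
  have iS: "i = Suc r"
  proof (rule ccontr)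
    assume "i \<noteq> Suc r"
    hence "Suc r < i" using i by auto
    hence "\<nu> (Suc r) < \<nu> i" using sm i(1) r1 by (simp add: strict_mono_on_def)
    thus False using \<open>\<nu> i \<le> a\<close> \<open>a \<le> \<nu> (Suc r)\<close> by simp
  qed
  have Da: "D (Suc r) a = 1" using \<open>\<nu> i \<le> a\<close> \<open>a \<le> \<nu> (Suc r)\<close> iS nu[OF r1] by simp
  show "Min A \<in> S" using Da aA unfolding S_def a_def by simp
  show "card S = kk (Suc r)" using row[OF r1] S_def by simp
  show "D (Suc r) \<in> PP (Min A) S"
    unfolding PP_def S_def using Da a_def vals box r1 by auto
  have colS: "\<And>i j. j \<in> S \<Longrightarrow> i \<noteq> Suc r \<Longrightarrow> D i j = 0"
  proof -
    fix i j assume j: "j \<in> S" "i \<noteq> Suc r"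
    show "D i j = 0"
    proof (rule ccontr)
      assume "D i j \<noteq> 0"
      hence "i \<in> {Suc r..r+Suc n}" using box by blast
      moreover have "j \<in> A" "D (Suc r) j \<noteq> 0" using j S_def by auto
      ultimately show False using card1_eq[OF col[OF \<open>j\<in>A\<close>], of i "Suc r"] \<open>D i j \<noteq> 0\<close> j(2) r1
        by auto
    qed
  qed
  let ?D = "D(Suc r := (\<lambda>_. 0))"
  have rows: "{Suc r..r+Suc n} = insert (Suc r) {Suc (Suc r)..Suc r+n}" by auto
  show "?D \<in> GG kk (A - S) (Suc r) n"
    unfolding GG_def
  proof (intro CollectI conjI allI ballI impI)
    fix i j assume "i \<notin> {Suc (Suc r)..Suc r + n} \<or> j \<notin> A - S"
    thus "?D i j = 0" using box colS rows by (cases "i = Suc r") auto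
  next
    fix i j show "?D i j \<in> {-1,0,1}" using vals by simp
  next
    fix j assume j: "j \<in> A - S"
    have "{i\<in>{Suc (Suc r)..Suc r+n}. ?D i j \<noteq> 0} = {i\<in>{Suc r..r+Suc n}. D i j \<noteq> 0}"
      using j S_def rows by auto
    thus "card {i\<in>{Suc (Suc r)..Suc r+n}. ?D i j \<noteq> 0} = 1" using col j by simp
  next
    fix i assume i: "i \<in> {Suc (Suc r)..Suc r+n}"
    have "{j\<in>A - S. ?D i j \<noteq> 0} = {j\<in>A. D i j \<noteq> 0}" using i colS by auto
    thus "card {j\<in>A - S. ?D i j \<noteq> 0} = kk i" using row[of i] i by auto
  next
    show "\<exists>\<nu>. strict_mono_on {Suc (Suc r)..Suc r+n} \<nu> \<and>
        (\<forall>i\<in>{Suc (Suc r)..Suc r+n}. ?D i (\<nu> i) = 1 \<and> (\<forall>j\<in>A - S. ?D i j \<noteq> 0 \<longrightarrow> \<nu> i \<le> j))"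
    proof (intro exI conjI ballI impI)
      show "strict_mono_on {Suc (Suc r)..Suc r+n} \<nu>"
        using sm by (auto simp: strict_mono_on_def)
    next
      fix i assume "i \<in> {Suc (Suc r)..Suc r+n}"
      thus "?D i (\<nu> i) = 1" using nu by auto
    next
      fix i j assume "i \<in> {Suc (Suc r)..Suc r+n}" "j \<in> A - S" "?D i j \<noteq> 0"
      thus "\<nu> i \<le> j" using nule by auto
    qed
  qed
qed



lemma peel_bwd:
  assumes fin: "finite A" and SA: "S \<subseteq> A" and aS: "Min A \<in> S" and cS: "card S = kk (Suc r)"
    and p: "p \<in> PP (Min A) S" and D': "D' \<in> GG kk (A - S) (Suc r) n"
  shows "D'(Suc r := p) \<in> GG kk A r (Suc n)"
proof -
  note G = D'[unfolded GG_def mem_Collect_eq]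
  have box: "\<And>i j. i \<notin> {Suc (Suc r)..Suc r+n} \<or> j \<notin> A - S \<Longrightarrow> D' i j = 0" using G by auto
  have vals: "\<And>i j. D' i j \<in> {-1,0,1}" using G by auto
  have col: "\<And>j. j\<in>A - S \<Longrightarrow> card {i\<in>{Suc (Suc r)..Suc r+n}. D' i j \<noteq> 0} = 1" using G by auto
  have row: "\<And>i. i\<in>{Suc (Suc r)..Suc r+n} \<Longrightarrow> card {j\<in>A - S. D' i j \<noteq> 0} = kk i" using G by auto
  obtain \<nu> where sm: "strict_mono_on {Suc (Suc r)..Suc r+n} \<nu>"
    and nu: "\<And>i. i\<in>{Suc (Suc r)..Suc r+n} \<Longrightarrow> D' i (\<nu> i) = 1"
    and nule: "\<And>i j. i\<in>{Suc (Suc r)..Suc r+n} \<Longrightarrow> j \<in> A - S \<Longrightarrow> D' i j \<noteq> 0 \<Longrightarrow> \<nu> i \<le> j"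
    using G by blast
  have pS: "\<And>j. p j \<noteq> 0 \<longleftrightarrow> j \<in> S" and pv: "\<And>j. p j \<in> {-1,0,1}" and pa: "p (Min A) = 1"
    using p unfolding PP_def by auto
  let ?D = "D'(Suc r := p)"
  have rows: "{Suc r..r+Suc n} = insert (Suc r) {Suc (Suc r)..Suc r+n}" by auto
  have nuA: "\<And>i. i \<in> {Suc (Suc r)..Suc r+n} \<Longrightarrow> Min A < \<nu> i"
  proof -
    fix i assume i: "i \<in> {Suc (Suc r)..Suc r+n}"
    have "D' i (\<nu> i) \<noteq> 0" using nu[OF i] by simp
    hence "\<nu> i \<in> A - S" using box by blast
    thus "Min A < \<nu> i" using fin aS by (metis DiffD1 DiffD2 Min_le le_neq_implies_less)
  qed
  show ?thesis
    unfolding GG_def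
  proof (intro CollectI conjI allI ballI impI)
    fix i j assume "i \<notin> {Suc r..r + Suc n} \<or> j \<notin> A"
    thus "?D i j = 0" using box pS SA rows by (cases "i = Suc r") auto
  next
    fix i j show "?D i j \<in> {-1,0,1}" using vals pv by simp
  next
    fix j assume j: "j \<in> A"
    show "card {i\<in>{Suc r..r+Suc n}. ?D i j \<noteq> 0} = 1"
    proof (cases "j \<in> S")
      case True
      have "{i\<in>{Suc r..r+Suc n}. ?D i j \<noteq> 0} = {Suc r}" using True pS box by auto
      thus ?thesis by simp
    next
      case False
      have "{i\<in>{Suc r..r+Suc n}. ?D i j \<noteq> 0} = {i\<in>{Suc (Suc r)..Suc r+n}. D' i j \<noteq> 0}"
        using False pS rows by auto
      thus ?thesis using col j False by simp
    qed
  next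
    fix i assume i: "i \<in> {Suc r..r+Suc n}"
    show "card {j\<in>A. ?D i j \<noteq> 0} = kk i"
    proof (cases "i = Suc r")
      case True
      have "{j\<in>A. ?D i j \<noteq> 0} = S" using True pS SA by auto
      thus ?thesis using cS True by simp
    next
      case False
      have "{j\<in>A. ?D i j \<noteq> 0} = {j\<in>A - S. D' i j \<noteq> 0}" using False box by auto
      thus ?thesis using row[of i] i False rows by auto
    qed
  next
    show "\<exists>\<nu>. strict_mono_on {Suc r..r+Suc n} \<nu> \<and>
        (\<forall>i\<in>{Suc r..r+Suc n}. ?D i (\<nu> i) = 1 \<and> (\<forall>j\<in>A. ?D i j \<noteq> 0 \<longrightarrow> \<nu> i \<le> j))"
    proof (intro exI conjI ballI impI)
      show "strict_mono_on {Suc r..r+Suc n} (\<nu>(Suc r := Min A))"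
        unfolding strict_mono_on_def
      proof (intro allI impI, elim conjE)
        fix x y assume xy: "x \<in> {Suc r..r+Suc n}" "y \<in> {Suc r..r+Suc n}" "x < y"
        show "(\<nu>(Suc r := Min A)) x < (\<nu>(Suc r := Min A)) y"
        proof (cases "x = Suc r")
          case True
          thus ?thesis using nuA[of y] xy by auto
        next
          case False
          thus ?thesis using sm xy by (auto simp: strict_mono_on_def)
        qed
      qed
    next
      fix i assume i: "i \<in> {Suc r..r+Suc n}"
      show "?D i ((\<nu>(Suc r := Min A)) i) = 1"
        using nu[of i] i pa rows by (cases "i = Suc r") auto
    next
      fix i j assume i: "i \<in> {Suc r..r+Suc n}" and j: "j \<in> A" and nz: "?D i j \<noteq> 0"
      show "(\<nu>(Suc r := Min A)) i \<le> j"
      proof (cases "i = Suc r")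
        case True thus ?thesis using fin j by simp
      next
        case False
        hence "D' i j \<noteq> 0" using nz by simp
        hence "j \<in> A - S" "i \<in> {Suc (Suc r)..Suc r+n}" using box by blast+
        thus ?thesis using nule \<open>D' i j \<noteq> 0\<close> False by simp
      qed
    qed
  qed
qed


lemma fin_mats:
  assumes "finite I" "finite J"
  shows "finite {D::nat\<Rightarrow>nat\<Rightarrow>int. \<forall>i j. D i j \<in> {-1,0,1} \<and> (D i j \<noteq> 0 \<longrightarrow> i \<in> I \<and> j \<in> J)}"
    (is "finite ?X")
proof -
  let ?f = "\<lambda>D. (\<lambda>p\<in>I\<times>J. D (fst p) (snd p))"
  have "inj_on ?f ?X"
  proof (rule inj_onI)
    fix D D' assume D: "D \<in> ?X" and D': "D' \<in> ?X" and eq: "?f D = ?f D'"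
    show "D = D'"
    proof (intro ext)
      fix i j
      show "D i j = D' i j"
      proof (cases "i \<in> I \<and> j \<in> J")
        case True
        have "?f D (i,j) = ?f D' (i,j)" using eq by simp
        thus ?thesis using True by simp
      next
        case False
        hence "D i j = 0" "D' i j = 0" using D D' by blast+
        thus ?thesis by simp
      qed
    qed
  qed
  moreover have "?f ` ?X \<subseteq> PiE (I\<times>J) (\<lambda>_. {-1,0,1})"
  proof
    fix g assume "g \<in> ?f ` ?X"
    then obtain D where D: "D \<in> ?X" "g = ?f D" by blast
    show "g \<in> PiE (I\<times>J) (\<lambda>_. {-1,0,1})" unfolding D(2)
      using D(1) by (simp only: PiE_iff restrict_extensional) auto
  qed
  moreover have "finite (PiE (I\<times>J) (\<lambda>_. {-1,0,1::int}))" using assms by (simp add: finite_PiE)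
  ultimately show ?thesis by (meson inj_on_finite)
qed

lemma fin_GG: assumes "finite A" shows "finite (GG kk A r n)"
proof (rule finite_subset[OF _ fin_mats[of "{Suc r..r+n}" A]])
  show "GG kk A r n \<subseteq> {D. \<forall>i j. D i j \<in> {-1,0,1} \<and> (D i j \<noteq> 0 \<longrightarrow> i \<in> {Suc r..r+n} \<and> j \<in> A)}"
    unfolding GG_def by blast
qed (use assms in auto)

lemma card_PP:
  assumes "finite S" "a \<in> S"
  shows "card (PP a S) = 2 ^ (card S - 1)"
proof -
  have "bij_betw (\<lambda>p. restrict p (S - {a})) (PP a S) (PiE (S - {a}) (\<lambda>_. {-1,1::int}))"
  proof (rule bij_betw_byWitness[where f' = "\<lambda>h j. if j = a then 1 else if j \<in> S - {a} then h j else 0"])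
    show "\<forall>p\<in>PP a S. (\<lambda>h j. if j = a then 1 else if j \<in> S - {a} then h j else 0) (restrict p (S - {a})) = p"
    proof
      fix p assume p: "p \<in> PP a S"
      show "(\<lambda>h j. if j = a then 1 else if j \<in> S - {a} then h j else 0) (restrict p (S - {a})) = p"
        using p unfolding PP_def by (auto intro!: ext)
    qed
    show "\<forall>h\<in>PiE (S - {a}) (\<lambda>_. {-1,1::int}). restrict ((\<lambda>h j. if j = a then 1 else if j \<in> S - {a} then h j else 0) h) (S - {a}) = h"
      by (auto simp: PiE_def extensional_def restrict_def intro!: ext)
    show "(\<lambda>p. restrict p (S - {a})) ` PP a S \<subseteq> PiE (S - {a}) (\<lambda>_. {-1,1::int})"
      unfolding PP_def by force
    show "(\<lambda>h j. if j = a then 1 else if j \<in> S - {a} then h j else 0) ` PiE (S - {a}) (\<lambda>_. {-1,1::int}) \<subseteq> PP a S"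
      unfolding PP_def using assms(2) by (auto simp: PiE_def Pi_def split: if_splits; force)
  qed
  hence "card (PP a S) = card (PiE (S - {a}) (\<lambda>_. {-1,1::int}))" by (rule bij_betw_same_card)
  also have "\<dots> = 2 ^ card (S - {a})" using assms by (simp add: card_PiE numeral_2_eq_2)
  also have "card (S - {a}) = card S - 1" using assms by simp
  finally show ?thesis .
qed

lemma card_SS:
  assumes "finite A" "a \<in> A" "1 \<le> k"
  shows "card {S. S \<subseteq> A \<and> a \<in> S \<and> card S = k} = (card A - 1) choose (k - 1)"
proof -
  have "bij_betw (\<lambda>S. S - {a}) {S. S \<subseteq> A \<and> a \<in> S \<and> card S = k} {B. B \<subseteq> A - {a} \<and> card B = k - 1}"
  proof (rule bij_betw_byWitness[where f' = "insert a"])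
    show "\<forall>S\<in>{S. S \<subseteq> A \<and> a \<in> S \<and> card S = k}. insert a (S - {a}) = S" by auto
    show "\<forall>B\<in>{B. B \<subseteq> A - {a} \<and> card B = k - 1}. insert a B - {a} = B" by auto
    show "(\<lambda>S. S - {a}) ` {S. S \<subseteq> A \<and> a \<in> S \<and> card S = k} \<subseteq> {B. B \<subseteq> A - {a} \<and> card B = k - 1}"
      using assms(1) by (auto dest: finite_subset)
    show "insert a ` {B. B \<subseteq> A - {a} \<and> card B = k - 1} \<subseteq> {S. S \<subseteq> A \<and> a \<in> S \<and> card S = k}"
    proof
      fix S assume "S \<in> insert a ` {B. B \<subseteq> A - {a} \<and> card B = k - 1}"
      then obtain B where B: "B \<subseteq> A - {a}" "card B = k - 1" "S = insert a B" by auto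
      have "finite B" using B(1) assms(1) by (meson finite_Diff finite_subset)
      moreover have "a \<notin> B" using B(1) by blast
      ultimately have "card S = Suc (k - 1)" using B by simp
      thus "S \<in> {S. S \<subseteq> A \<and> a \<in> S \<and> card S = k}" using B assms by auto
    qed
  qed
  hence "card {S. S \<subseteq> A \<and> a \<in> S \<and> card S = k} = card {B. B \<subseteq> A - {a} \<and> card B = k - 1}"
    by (rule bij_betw_same_card)
  also have "\<dots> = card (A - {a}) choose (k - 1)" using assms by (simp add: n_subsets)
  finally show ?thesis using assms by simp
qed


definition FF :: "(nat \<Rightarrow> nat) \<Rightarrow> nat \<Rightarrow> nat \<Rightarrow> nat \<Rightarrow> nat" where
  "FF kk N r n = (\<Prod>i\<in>{Suc r..r+n}. (N - (\<Sum>j\<in>{Suc r..<i}. kk j) - 1) choose (kk i - 1))"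

lemma FF_Suc: "FF kk N r (Suc n) = ((N - 1) choose (kk (Suc r) - 1)) * FF kk (N - kk (Suc r)) (Suc r) n"
proof -
  have rows: "{Suc r..r+Suc n} = insert (Suc r) {Suc (Suc r)..Suc r+n}" by auto
  have "FF kk N r (Suc n) = ((N - 1) choose (kk (Suc r) - 1)) *
      (\<Prod>i\<in>{Suc (Suc r)..Suc r+n}. (N - (\<Sum>j\<in>{Suc r..<i}. kk j) - 1) choose (kk i - 1))"
    unfolding FF_def rows by (subst prod.insert) auto
  also have "(\<Prod>i\<in>{Suc (Suc r)..Suc r+n}. (N - (\<Sum>j\<in>{Suc r..<i}. kk j) - 1) choose (kk i - 1))
     = FF kk (N - kk (Suc r)) (Suc r) n"
    unfolding FF_def
  proof (rule prod.cong[OF refl])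
    fix i assume i: "i \<in> {Suc (Suc r)..Suc r+n}"
    hence "{Suc r..<i} = insert (Suc r) {Suc (Suc r)..<i}" by auto
    hence "(\<Sum>j\<in>{Suc r..<i}. kk j) = kk (Suc r) + (\<Sum>j\<in>{Suc (Suc r)..<i}. kk j)" by simp
    thus "(N - (\<Sum>j\<in>{Suc r..<i}. kk j) - 1) choose (kk i - 1) =
       (N - kk (Suc r) - (\<Sum>j\<in>{Suc (Suc r)..<i}. kk j) - 1) choose (kk i - 1)" by simp
  qed
  finally show ?thesis .
qed

lemma GG_bij:
  assumes fin: "finite A" and ne: "A \<noteq> {}"
  shows "bij_betw (\<lambda>D. ({j\<in>A. D (Suc r) j \<noteq> 0}, D (Suc r), D(Suc r := (\<lambda>_. 0))))
     (GG kk A r (Suc n))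
     (SIGMA S:{S. S \<subseteq> A \<and> Min A \<in> S \<and> card S = kk (Suc r)}. PP (Min A) S \<times> GG kk (A - S) (Suc r) n)"
proof (rule bij_betw_byWitness[where f' = "\<lambda>(S, p, D'). D'(Suc r := p)"])
  show "\<forall>D\<in>GG kk A r (Suc n). (\<lambda>(S, p, D'). D'(Suc r := p)) ({j\<in>A. D (Suc r) j \<noteq> 0}, D (Suc r), D(Suc r := (\<lambda>_. 0))) = D"
    by simp
  show "\<forall>x\<in>(SIGMA S:{S. S \<subseteq> A \<and> Min A \<in> S \<and> card S = kk (Suc r)}. PP (Min A) S \<times> GG kk (A - S) (Suc r) n).
     (\<lambda>D. ({j\<in>A. D (Suc r) j \<noteq> 0}, D (Suc r), D(Suc r := (\<lambda>_. 0)))) ((\<lambda>(S, p, D'). D'(Suc r := p)) x) = x"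
  proof
    fix x assume x: "x \<in> (SIGMA S:{S. S \<subseteq> A \<and> Min A \<in> S \<and> card S = kk (Suc r)}. PP (Min A) S \<times> GG kk (A - S) (Suc r) n)"
    then obtain S p D' where xe: "x = (S, p, D')" and S: "S \<subseteq> A" and p: "p \<in> PP (Min A) S"
      and D': "D' \<in> GG kk (A - S) (Suc r) n" by auto
    have "D' (Suc r) = (\<lambda>_. 0)" using D' unfolding GG_def by auto
    hence "(D'(Suc r := p))(Suc r := (\<lambda>_. 0)) = D'" by (auto intro!: ext)
    moreover have "{j\<in>A. p j \<noteq> 0} = S" using p S unfolding PP_def by auto
    ultimately show "(\<lambda>D. ({j\<in>A. D (Suc r) j \<noteq> 0}, D (Suc r), D(Suc r := (\<lambda>_. 0)))) ((\<lambda>(S, p, D'). D'(Suc r := p)) x) = x"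
      using xe by simp
  qed
  show "(\<lambda>D. ({j\<in>A. D (Suc r) j \<noteq> 0}, D (Suc r), D(Suc r := (\<lambda>_. 0)))) ` GG kk A r (Suc n)
    \<subseteq> (SIGMA S:{S. S \<subseteq> A \<and> Min A \<in> S \<and> card S = kk (Suc r)}. PP (Min A) S \<times> GG kk (A - S) (Suc r) n)"
    using peel_fwd[OF _ fin ne] by auto
  show "(\<lambda>(S, p, D'). D'(Suc r := p)) ` (SIGMA S:{S. S \<subseteq> A \<and> Min A \<in> S \<and> card S = kk (Suc r)}. PP (Min A) S \<times> GG kk (A - S) (Suc r) n)
    \<subseteq> GG kk A r (Suc n)"
    using peel_bwd[OF fin] by auto
qed

lemma GG_card:
  "finite A \<Longrightarrow> \<forall>i\<in>{Suc r..r+n}. 0 < kk i \<Longrightarrow> (\<Sum>i\<in>{Suc r..r+n}. kk i) = card A \<Longrightarrow>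
   card (GG kk A r n) = 2 ^ (card A - n) * FF kk (card A) r n"
proof (induction n arbitrary: A r)
  case 0
  hence A: "A = {}" by simp
  have "GG kk A r 0 = {\<lambda>_ _. 0}"
  proof (intro equalityI subsetI)
    fix D assume "D \<in> GG kk A r 0"
    hence "\<forall>i j. D i j = 0" unfolding GG_def by auto
    thus "D \<in> {\<lambda>_ _. 0}" by (auto intro!: ext)
  next
    fix D :: "nat \<Rightarrow> nat \<Rightarrow> int" assume "D \<in> {\<lambda>_ _ . 0::int}"
    thus "D \<in> GG kk A r 0" unfolding GG_def A by (auto simp: strict_mono_on_def)
  qed
  thus ?case by (simp add: FF_def A)
next
  case (Suc n)
  let ?k = "kk (Suc r)"
  let ?a = "Min A"
  let ?SS = "{S. S \<subseteq> A \<and> ?a \<in> S \<and> card S = ?k}"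
  have rows: "{Suc r..r+Suc n} = insert (Suc r) {Suc (Suc r)..Suc r+n}" by auto
  have kpos: "0 < ?k" using Suc.prems(2) by simp
  have sumsplit: "(\<Sum>i\<in>{Suc r..r+Suc n}. kk i) = ?k + (\<Sum>i\<in>{Suc (Suc r)..Suc r+n}. kk i)"
    unfolding rows by simp
  have "n = (\<Sum>i\<in>{Suc (Suc r)..Suc r+n}. (1::nat))" by simp
  also have "\<dots> \<le> (\<Sum>i\<in>{Suc (Suc r)..Suc r+n}. kk i)"
  proof (rule sum_mono)
    fix i assume "i \<in> {Suc (Suc r)..Suc r+n}"
    hence "0 < kk i" using Suc.prems(2) by auto
    thus "1 \<le> kk i" by simp
  qed
  finally have nle: "n \<le> card A - ?k" using sumsplit Suc.prems(3) by simp
  have kle: "?k \<le> card A" using sumsplit Suc.prems(3) by simp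
  have ne: "A \<noteq> {}" using kle kpos by auto
  have aA: "?a \<in> A" using ne Suc.prems(1) by simp
  define C where "C = 2 ^ (?k - 1) * (2 ^ (card A - ?k - n) * FF kk (card A - ?k) (Suc r) n)"
  have finSS: "finite ?SS" by (rule finite_subset[of _ "Pow A"]) (use Suc.prems(1) in auto)
  have "card (GG kk A r (Suc n)) = card (SIGMA S:?SS. PP ?a S \<times> GG kk (A - S) (Suc r) n)"
    by (rule bij_betw_same_card[OF GG_bij[OF Suc.prems(1) ne]])
  also have "\<dots> = (\<Sum>S\<in>?SS. card (PP ?a S \<times> GG kk (A - S) (Suc r) n))"
  proof (rule card_SigmaI[OF finSS], intro ballI)
    fix S assume S: "S \<in> ?SS"
    have "finite (PP ?a S)"
    proof (rule ccontr)
      assume "infinite (PP ?a S)"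
      moreover have "finite S" using S Suc.prems(1) finite_subset by auto
      ultimately show False using card_PP[of S ?a] S by simp
    qed
    thus "finite (PP ?a S \<times> GG kk (A - S) (Suc r) n)" using fin_GG Suc.prems(1) by auto
  qed
  also have "\<dots> = (\<Sum>S\<in>?SS. C)"
  proof (rule sum.cong[OF refl])
    fix S assume S: "S \<in> ?SS"
    have finS: "finite S" using S Suc.prems(1) finite_subset by auto
    have cAS: "card (A - S) = card A - ?k" using S Suc.prems(1) by (simp add: card_Diff_subset finS)
    have IH: "card (GG kk (A - S) (Suc r) n) = 2 ^ (card (A - S) - n) * FF kk (card (A - S)) (Suc r) n"
      using Suc.prems sumsplit cAS by (intro Suc.IH) auto
    show "card (PP ?a S \<times> GG kk (A - S) (Suc r) n) = C"
    proof -
      have aS: "?a \<in> S" using S by simp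
      show ?thesis unfolding card_cartesian_product IH card_PP[OF finS aS] C_def cAS using S by simp
    qed
  qed
  also have "\<dots> = ((card A - 1) choose (?k - 1)) * C"
    using card_SS[OF Suc.prems(1) aA, of ?k] kpos by simp
  also have "\<dots> = 2 ^ (card A - Suc n) * FF kk (card A) r (Suc n)"
  proof -
    have "(?k - 1) + (card A - ?k - n) = card A - Suc n" using nle kpos kle by linarith
    hence "2 ^ (?k - 1) * 2 ^ (card A - ?k - n) = (2::nat) ^ (card A - Suc n)"
      by (metis power_add)
    thus ?thesis unfolding C_def FF_Suc by (simp add: algebra_simps)
  qed
  finally show ?case .
qed


lemma img_card_eq:
  fixes \<nu> \<mu> :: "nat \<Rightarrow> nat"
  assumes "is_division k m \<nu> \<mu>"
  shows "\<nu> ` {1..m} \<union> \<mu> ` {1..k-m} = {1..k}"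
proof -
  have sn: "strict_mono_on {1..m} \<nu>" and su: "strict_mono_on {1..k-m} \<mu>"
    and s1: "\<nu> ` {1..m} \<subseteq> {1..k}" and s2: "\<mu> ` {1..k-m} \<subseteq> {1..k}"
    and dj: "\<nu> ` {1..m} \<inter> \<mu> ` {1..k-m} = {}" and mk: "m \<le> k - 1"
    using assms unfolding is_division_def by auto
  have c1: "card (\<nu> ` {1..m}) = m" using strict_mono_on_imp_inj_on[OF sn] by (simp add: card_image)
  have c2: "card (\<mu> ` {1..k-m}) = k - m" using strict_mono_on_imp_inj_on[OF su] by (simp add: card_image)
  have "card (\<nu> ` {1..m} \<union> \<mu> ` {1..k-m}) = k"
    using card_Un_disjoint[OF _ _ dj] c1 c2 mk by simp
  thus ?thesis using s1 s2 by (intro card_subset_eq) auto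
qed

lemma adm_iff:
  fixes D :: "nat \<Rightarrow> nat \<Rightarrow> int"
  assumes k2: "2 \<le> k" and m1: "1 \<le> m" and mk: "m \<le> k - 1"
    and box: "\<forall>i j. i \<notin> {1..m} \<or> j \<notin> {1..k} \<longrightarrow> D i j = 0"
    and vals: "\<forall>i j. D i j \<in> {-1,0,1}"
    and col: "\<forall>j\<in>{1..k}. card {i\<in>{1..m}. D i j \<noteq> 0} = 1"
  shows "k_admissible k m D \<longleftrightarrow>
    (\<exists>\<nu>. strict_mono_on {1..m} \<nu> \<and> (\<forall>i\<in>{1..m}. D i (\<nu> i) = 1 \<and> (\<forall>j\<in>{1..k}. D i j \<noteq> 0 \<longrightarrow> \<nu> i \<le> j)))"
proof
  assume "k_admissible k m D"
  then obtain \<nu> \<mu> q where q: "q > 0" and div: "is_division k m \<nu> \<mu>" and ad: "admissible_wrt k m \<nu> \<mu> q D"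
    unfolding k_admissible_def by blast
  have dnu: "\<And>i j. i \<in> {1..m} \<Longrightarrow> j \<in> {1..m} \<Longrightarrow> D i (\<nu> j) = (if i = j then q else 0)"
    and dmu: "\<And>i j. i \<in> {1..m} \<Longrightarrow> j \<in> {1..k-m} \<Longrightarrow> \<mu> j < \<nu> i \<Longrightarrow> D i (\<mu> j) = 0"
    using ad unfolding admissible_wrt_def by auto
  have "D 1 (\<nu> 1) = q" using dnu[of 1 1] m1 by simp
  moreover have "D 1 (\<nu> 1) \<in> {-1,0,1}" using vals by blast
  ultimately have q1: "q = 1" using q by auto
  have sn: "strict_mono_on {1..m} \<nu>" using div unfolding is_division_def by auto
  have U: "\<nu> ` {1..m} \<union> \<mu> ` {1..k-m} = {1..k}" by (rule img_card_eq[OF div])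
  show "\<exists>\<nu>. strict_mono_on {1..m} \<nu> \<and> (\<forall>i\<in>{1..m}. D i (\<nu> i) = 1 \<and> (\<forall>j\<in>{1..k}. D i j \<noteq> 0 \<longrightarrow> \<nu> i \<le> j))"
  proof (intro exI conjI ballI impI)
    show "strict_mono_on {1..m} \<nu>" by (rule sn)
  next
    fix i assume "i \<in> {1..m}" thus "D i (\<nu> i) = 1" using dnu q1 by simp
  next
    fix i j assume i: "i \<in> {1..m}" and j: "j \<in> {1..k}" and nz: "D i j \<noteq> 0"
    have "j \<in> \<nu> ` {1..m} \<union> \<mu> ` {1..k-m}" using U j by simp
    thus "\<nu> i \<le> j"
    proof
      assume "j \<in> \<nu> ` {1..m}"
      then obtain i' where i': "i' \<in> {1..m}" "j = \<nu> i'" by auto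
      hence "i = i'" using dnu[OF i i'(1)] nz by (auto split: if_splits)
      thus ?thesis using i' by simp
    next
      assume "j \<in> \<mu> ` {1..k-m}"
      then obtain l where l: "l \<in> {1..k-m}" "j = \<mu> l" by auto
      show ?thesis using dmu[OF i l(1)] nz l(2) by (meson not_le)
    qed
  qed
next
  assume "\<exists>\<nu>. strict_mono_on {1..m} \<nu> \<and> (\<forall>i\<in>{1..m}. D i (\<nu> i) = 1 \<and> (\<forall>j\<in>{1..k}. D i j \<noteq> 0 \<longrightarrow> \<nu> i \<le> j))"
  then obtain \<nu> where sn: "strict_mono_on {1..m} \<nu>" and nu: "\<And>i. i\<in>{1..m} \<Longrightarrow> D i (\<nu> i) = 1"
    and nule: "\<And>i j. i\<in>{1..m} \<Longrightarrow> j\<in>{1..k} \<Longrightarrow> D i j \<noteq> 0 \<Longrightarrow> \<nu> i \<le> j" by blast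
  have nuk: "\<nu> ` {1..m} \<subseteq> {1..k}"
  proof
    fix x assume "x \<in> \<nu> ` {1..m}"
    then obtain i where i: "i \<in> {1..m}" "x = \<nu> i" by auto
    have "D i (\<nu> i) \<noteq> 0" using nu[OF i(1)] by simp
    thus "x \<in> {1..k}" using box i by blast
  qed
  define C where "C = {1..k} - \<nu> ` {1..m}"
  define xs where "xs = sorted_list_of_set C"
  define \<mu> where "\<mu> = (\<lambda>l. xs ! (l - 1))"
  have cnu: "card (\<nu> ` {1..m}) = m" using strict_mono_on_imp_inj_on[OF sn] by (simp add: card_image)
  have cC: "card C = k - m" unfolding C_def using nuk cnu by (simp add: card_Diff_subset)
  have lxs: "length xs = k - m" unfolding xs_def using cC by simp
  have sxs: "set xs = C" unfolding xs_def C_def by simp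
  have srt: "sorted_wrt (<) xs" unfolding xs_def
    by (simp add: strict_sorted_iff)
  have muC: "\<And>l. l \<in> {1..k-m} \<Longrightarrow> \<mu> l \<in> C"
  proof -
    fix l assume "l \<in> {1..k-m}"
    hence "l - 1 < length xs" using lxs by auto
    hence "xs ! (l - 1) \<in> set xs" by (rule nth_mem)
    thus "\<mu> l \<in> C" unfolding \<mu>_def using sxs by simp
  qed
  have smu: "strict_mono_on {1..k-m} \<mu>"
    unfolding strict_mono_on_def \<mu>_def
  proof (intro allI impI, elim conjE)
    fix x y assume "x \<in> {1..k-m}" "y \<in> {1..k-m}" "x < y"
    thus "xs ! (x - 1) < xs ! (y - 1)" using sorted_wrt_nth_less[OF srt, of "x-1" "y-1"] lxs by auto
  qed
  have div: "is_division k m \<nu> \<mu>"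
    unfolding is_division_def
  proof (intro conjI)
    show "\<mu> ` {1..k-m} \<subseteq> {1..k}" using muC C_def by blast
    show "\<nu> ` {1..m} \<inter> \<mu> ` {1..k-m} = {}"
    proof (rule ccontr)
      assume "\<nu> ` {1..m} \<inter> \<mu> ` {1..k-m} \<noteq> {}"
      then obtain x l where xl: "x \<in> \<nu> ` {1..m}" "l \<in> {1..k-m}" "x = \<mu> l" by blast
      have "\<mu> l \<in> C" using muC[OF xl(2)] .
      hence "\<mu> l \<notin> \<nu> ` {1..m}" unfolding C_def by simp
      thus False using xl by simp
    qed
  qed (use m1 mk sn nuk smu in auto)
  have gcd: "Gcd {D i j | i j. i \<in> {1..m} \<and> j \<in> {1..k}} = 1"
  proof (rule Gcd_eq_1_I[of 1])
    have "1 \<in> {1..m}" using m1 by simp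
    moreover have "\<nu> 1 \<in> {1..k}" using nuk \<open>1 \<in> {1..m}\<close> by blast
    ultimately show "1 \<in> {D i j | i j. i \<in> {1..m} \<and> j \<in> {1..k}}" using nu[of 1] by (metis (mono_tags, lifting) mem_Collect_eq)
  qed simp
  have dnu: "\<forall>i\<in>{1..m}. \<forall>j\<in>{1..m}. D i (\<nu> j) = (if i = j then 1 else 0)"
  proof (intro ballI)
    fix i j assume i: "i \<in> {1..m}" and j: "j \<in> {1..m}"
    show "D i (\<nu> j) = (if i = j then 1 else 0)"
    proof (cases "i = j")
      case True thus ?thesis using nu i by simp
    next
      case False
      have nj: "\<nu> j \<in> {1..k}" using nuk j by blast
      show ?thesis
      proof (rule ccontr)
        assume "D i (\<nu> j) \<noteq> (if i = j then 1 else 0)"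
        hence "D i (\<nu> j) \<noteq> 0" using False by simp
        moreover have "D j (\<nu> j) \<noteq> 0" using nu j by simp
        ultimately have "i = j" using card1_eq[OF col[rule_format, OF nj], of i j] i j by auto
        thus False using False by simp
      qed
    qed
  qed
  have dmu: "\<forall>i\<in>{1..m}. \<forall>j\<in>{1..k-m}. \<mu> j < \<nu> i \<longrightarrow> D i (\<mu> j) = 0"
  proof (intro ballI impI)
    fix i j assume i: "i \<in> {1..m}" and j: "j \<in> {1..k-m}" and lt: "\<mu> j < \<nu> i"
    have "\<mu> j \<in> {1..k}" using muC[OF j] C_def by auto
    thus "D i (\<mu> j) = 0" using nule[OF i] lt by (meson not_le)
  qed
  have cols: "\<forall>j\<in>{1..k}. \<exists>i\<in>{1..m}. D i j \<noteq> 0"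
  proof
    fix j assume "j \<in> {1..k}"
    from card1_ex[OF col[rule_format, OF this]] show "\<exists>i\<in>{1..m}. D i j \<noteq> 0" by auto
  qed
  show "k_admissible k m D"
  proof -
    have adm: "admissible_wrt k m \<nu> \<mu> 1 D" unfolding admissible_wrt_def using gcd dnu dmu cols by blast
    have "(0::int) < 1" by simp
    thus ?thesis unfolding k_admissible_def using k2 div adm by blast
  qed
qed


lemma X_eq:
  assumes k2: "2 \<le> k" and m1: "1 \<le> m" and mk: "m \<le> k - 1"
  shows "X_set k m kk = GG kk {1..k} 0 m"
proof (intro set_eqI)
  fix D :: "nat \<Rightarrow> nat \<Rightarrow> int"
  have R: "{Suc 0..0+m} = {1..m}" by simp
  show "D \<in> X_set k m kk \<longleftrightarrow> D \<in> GG kk {1..k} 0 m"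
    unfolding X_set_def GG_def R mem_Collect_eq
    using adm_iff[OF k2 m1 mk, of D] by blast
qed

lemma FF_final:
  assumes m1: "1 \<le> m" and s: "(\<Sum>i=1..m. kk i) = k"
  shows "FF kk k 0 m = (\<Prod>i=1..m-1. (k - (\<Sum>j=1..i-1. kk j) - 1) choose (kk i - 1))"
proof -
  obtain m' where m: "m = Suc m'" using m1 by (cases m) auto
  have R: "{Suc 0..0+m} = insert m {1..m'}" using m by auto
  have s': "k = (\<Sum>j=1..m'. kk j) + kk m" using s m by simp
  have L: "{Suc 0..<m} = {1..m'}" using m by auto
  have "FF kk k 0 m = ((k - (\<Sum>j\<in>{Suc 0..<m}. kk j) - 1) choose (kk m - 1)) *
      (\<Prod>i\<in>{1..m'}. (k - (\<Sum>j\<in>{Suc 0..<i}. kk j) - 1) choose (kk i - 1))"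
    unfolding FF_def R by (subst prod.insert) (auto simp: m)
  also have "(k - (\<Sum>j\<in>{Suc 0..<m}. kk j) - 1) choose (kk m - 1) = 1"
    unfolding L using s' by simp
  also have "(\<Prod>i\<in>{1..m'}. (k - (\<Sum>j\<in>{Suc 0..<i}. kk j) - 1) choose (kk i - 1))
      = (\<Prod>i=1..m-1. (k - (\<Sum>j=1..i-1. kk j) - 1) choose (kk i - 1))"
  proof -
    have "\<And>i. i \<in> {1..m'} \<Longrightarrow> {Suc 0..<i} = {1..i-1}" by auto
    thus ?thesis using m by (intro prod.cong) auto
  qed
  finally show ?thesis by simp
qed

theorem proposition3p4:
  fixes k m :: nat and kk :: "nat \<Rightarrow> nat"
  assumes "2 \<le> k" and "1 \<le> m" and "m \<le> k - 1"
    and "\<forall>i\<in>{1..m}. kk i > 0" and "(\<Sum>i=1..m. kk i) = k"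
  shows "card (X_set k m kk) =
    2 ^ (k - m) * (\<Prod>i=1..m-1. (k - (\<Sum>j=1..i-1. kk j) - 1) choose (kk i - 1))"
proof -
  have R: "{Suc 0..0+m} = {1..m}" by simp
  have "card (GG kk {1..k} 0 m) = 2 ^ (card {1..k} - m) * FF kk (card {1..k}) 0 m"
    by (rule GG_card) (use assms in \<open>simp_all only: R\<close>, auto)
  thus ?thesis using X_eq[OF assms(1-3)] FF_final[OF assms(2) assms(5)] by simp
qed

end
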